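(* Let $u$ be a trigonometric polynomial that is not identically zero and let $K>0$. There exists a constant $\eta=\eta(u,K)$ such that for every finite collection $b_1,\ldots,b_k\in\mathbb{R}$ and every interval $I\subset\mathbb{R}$ of length $K$, there exists a measurable subset $E\subset I$ with $|E|>|I|/2$ such that \[ \inf_{x\in E}\Big|\prod_{i=1}^k u(x+b_i)\Big|\ge e^{-\eta k}. \]
   Context: A trigonometric polynomial is a function $u(x)=\sum_{j=1}^m c_je^{2\pi i a_j x}$ with $a_j\in\mathbb{R}$, $c_j\in\mathbb{C}$ (not necessarily periodic). $|E|$ denotes Lebesgue measure. *)

theory Defs
  imports "HOL-Analysis.Analysis"
begin

definition trig_poly :: "(real \<Rightarrow> complex) \<Rightarrow> bool" where
  "trig_poly u \<longleftrightarrow> (\<exists>m::nat. \<exists>a::nat \<Rightarrow> real. \<exists>c::nat \<Rightarrow> complex.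
      \<forall>x. u x = (\<Sum>j<m. c j * exp (2 * pi * \<i> * complex_of_real (a j * x))))"

end

theory Submission
  imports Defs "HOL-Computational_Algebra.Polynomial"
begin


lemma points_bound:
  fixes D :: "nat \<Rightarrow> real \<Rightarrow> real"
  assumes der: "\<And>m y. (D m has_real_derivative D (Suc m) y) (at y)"
    and low: "\<And>y. y \<in> {a..b} \<Longrightarrow> c \<le> \<bar>D n y\<bar>"
    and pts: "\<And>i. i < 2^n \<Longrightarrow> x i \<in> {a..b} \<and> \<bar>D 0 (x i)\<bar> \<le> t"
    and sp: "\<And>i. Suc i < 2^n \<Longrightarrow> x i + g \<le> x (Suc i)"
    and g: "g > 0"
  shows "c * g^n \<le> 2^n * t"
  using assms
proof (induction n arbitrary: D x t)
  case 0
  then show ?case by (metis nat_power_eq_Suc_0_iff mult_1 mult_1_right order_trans pos2 power_0 zero_less_power)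
next
  case (Suc n)
  have "\<forall>i. \<exists>z. i < 2^n \<longrightarrow> x (2*i) < z \<and> z < x (2*i+1) \<and>
      D 0 (x(2*i+1)) - D 0 (x (2*i)) = (x(2*i+1) - x(2*i)) * D 1 z"
  proof
    fix i
    show "\<exists>z. i < 2^n \<longrightarrow> x (2*i) < z \<and> z < x (2*i+1) \<and>
      D 0 (x(2*i+1)) - D 0 (x (2*i)) = (x(2*i+1) - x(2*i)) * D 1 z"
    proof (cases "i < 2^n")
      case True
      have "x (2*i) + g \<le> x (Suc (2*i))" using Suc.prems(4)[of "2*i"] True by simp
      hence "x (2*i) < x(2*i+1)" using Suc.prems(5) by simp
      from MVT2[OF this, of "D 0" "D 1"] Suc.prems(1) show ?thesis by (simp add: One_nat_def)
    qed simp
  qed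
  then obtain \<xi> where \<xi>: "\<And>i. i < 2^n \<Longrightarrow> x (2*i) < \<xi> i \<and> \<xi> i < x (2*i+1) \<and>
      D 0 (x(2*i+1)) - D 0 (x (2*i)) = (x(2*i+1) - x(2*i)) * D 1 (\<xi> i)" by metis
  have xin: "x j \<in> {a..b} \<and> \<bar>D 0 (x j)\<bar> \<le> t" if "j < 2^Suc n" for j using Suc.prems(3) that by blast
  have b1: "\<bar>D 1 (\<xi> i)\<bar> \<le> 2*t/g" if i: "i < 2^n" for i
  proof -
    have i1: "2*i+1 < 2^Suc n" "2*i < 2^Suc n" using i by auto
    have gd: "g \<le> x(2*i+1) - x(2*i)" using Suc.prems(4)[of "2*i"] i1 by simp
    have "\<bar>D 1 (\<xi> i)\<bar> * g \<le> \<bar>D 1 (\<xi> i)\<bar> * (x(2*i+1) - x(2*i))"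
      by (intro mult_left_mono gd) auto
    also have "\<dots> = \<bar>D 0 (x(2*i+1)) - D 0 (x (2*i))\<bar>" using \<xi>[OF i] gd Suc.prems(5)
      by (simp add: abs_mult)
    also have "\<dots> \<le> 2*t" using xin[OF i1(1)] xin[OF i1(2)] by linarith
    finally show ?thesis using Suc.prems(5) by (simp add: field_simps)
  qed
  have "c * g^n \<le> 2^n * (2*t/g)"
  proof (rule Suc.IH[of "\<lambda>m. D (Suc m)" \<xi>])
    show "(D (Suc m) has_real_derivative D (Suc (Suc m)) y) (at y)" for m y using Suc.prems(1) .
    show "c \<le> \<bar>D (Suc n) y\<bar>" if "y \<in> {a..b}" for y using Suc.prems(2) that by simp
    show "\<xi> i \<in> {a..b} \<and> \<bar>D (Suc 0) (\<xi> i)\<bar> \<le> 2 * t / g" if i: "i < 2^n" for i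
    proof -
      have i1: "2*i+1 < 2^Suc n" "2*i < 2^Suc n" using i by auto
      show ?thesis using \<xi>[OF i] xin[OF i1(1)] xin[OF i1(2)] b1[OF i] by auto
    qed
    show "\<xi> i + g \<le> \<xi> (Suc i)" if i: "Suc i < 2^n" for i
    proof -
      have "Suc (2*i+1) < 2^Suc n" using i by auto
      then have "x (2*i+1) + g \<le> x (2*(Suc i))" using Suc.prems(4)[of "2*i+1"] by simp
      then show ?thesis using \<xi>[of i] \<xi>[OF i] i by fastforce
    qed
    show "0 < g" by fact
  qed
  then have "c * g^n * g \<le> 2^n * (2*t/g) * g" using Suc.prems(5) by (intro mult_right_mono) auto
  then show ?case using Suc.prems(5) by (simp add: field_simps)
qed

lemma greedy:
  fixes S :: "real set"
  assumes "compact S" "g > 0"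
  shows "emeasure lborel S \<le> ennreal (real n * g) \<or> (\<exists>x. (\<forall>i\<le>n. x i \<in> S) \<and> (\<forall>i<n. x i + g \<le> x (Suc i)))"
  using assms
proof (induction n arbitrary: S)
  case 0
  then show ?case by (cases "S = {}") auto
next
  case (Suc n)
  show ?case
  proof (cases "S = {}")
    case True then show ?thesis by simp
  next
    case False
    define x0 where "x0 = Inf S"
    have x0: "x0 \<in> S" unfolding x0_def using False Suc.prems
      by (intro closed_contains_Inf) (auto simp: compact_imp_closed compact_imp_bounded bounded_imp_bdd_below)
    have x0le: "x0 \<le> y" if "y \<in> S" for y unfolding x0_def using that Suc.prems
      by (intro cInf_lower) (auto simp: compact_imp_bounded bounded_imp_bdd_below)
    define S' where "S' = S \<inter> {x0+g..}"
    have cS': "compact S'" unfolding S'_def using Suc.prems by (intro compact_Int_closed) auto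
    from Suc.IH[OF cS' Suc.prems(2)] show ?thesis
    proof
      assume h: "emeasure lborel S' \<le> ennreal (real n * g)"
      have "S \<subseteq> {x0..x0+g} \<union> S'" using x0le unfolding S'_def by auto
      hence "emeasure lborel S \<le> emeasure lborel ({x0..x0+g} \<union> S')"
        using cS' by (intro emeasure_mono) (auto intro!: borel_compact compact_Un)
      also have "\<dots> \<le> emeasure lborel {x0..x0+g} + emeasure lborel S'"
        by (intro emeasure_subadditive) (auto intro!: borel_compact cS')
      also have "\<dots> \<le> ennreal g + ennreal (real n * g)" using h Suc.prems(2) by (intro add_mono) auto
      also have "\<dots> = ennreal (real (Suc n) * g)" using Suc.prems(2)
        by (simp add: ennreal_plus[symmetric] algebra_simps del: ennreal_plus)
      finally show ?thesis by simp
    next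
      assume "\<exists>x. (\<forall>i\<le>n. x i \<in> S') \<and> (\<forall>i<n. x i + g \<le> x (Suc i))"
      then obtain y where y: "\<forall>i\<le>n. y i \<in> S'" "\<forall>i<n. y i + g \<le> y (Suc i)" by blast
      define x where "x i = (case i of 0 \<Rightarrow> x0 | Suc j \<Rightarrow> y j)" for i
      have "(\<forall>i\<le>Suc n. x i \<in> S)" using y(1) x0 by (auto simp: x_def S'_def split: nat.split)
      moreover have "\<forall>i<Suc n. x i + g \<le> x (Suc i)"
        using y by (auto simp: x_def S'_def split: nat.split)
      ultimately show ?thesis by blast
    qed
  qed
qed

lemma lip_bound:
  fixes f f' :: "real \<Rightarrow> real"
  assumes der: "\<And>y. (f has_real_derivative f' y) (at y)" and bd: "\<And>y. \<bar>f' y\<bar> \<le> B"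
  shows "\<bar>f y - f x\<bar> \<le> B * \<bar>y - x\<bar>"
proof (cases x y rule: linorder_cases)
  case less
  from MVT2[OF less, of f f'] der obtain z where "f y - f x = (y - x) * f' z" by blast
  then show ?thesis using bd[of z] less by (simp add: abs_mult mult.commute mult_right_mono)
next
  case greater
  from MVT2[OF greater, of f f'] der obtain z where "f x - f y = (x - y) * f' z" by blast
  then have "\<bar>f y - f x\<bar> = \<bar>x - y\<bar> * \<bar>f' z\<bar>" by (simp add: abs_mult abs_minus_commute)
  then show ?thesis using bd[of z] greater by (simp add: mult.commute mult_left_mono abs_minus_commute)
qed simp

lemma sublevel:
  fixes D :: "nat \<Rightarrow> real \<Rightarrow> real"
  assumes der: "\<And>m y. (D m has_real_derivative D (Suc m) y) (at y)"
    and low: "\<And>y. y \<in> {a..b} \<Longrightarrow> c \<le> \<bar>D n y\<bar>"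
    and g: "g > 0" and gt: "2^n * t < c * g^n"
  shows "emeasure lborel {y\<in>{a..b}. \<bar>D 0 y\<bar> \<le> t} \<le> ennreal (2^n * g)"
proof -
  define S where "S = {a..b} \<inter> {y. \<bar>D 0 y\<bar> \<le> t}"
  have cont: "continuous_on UNIV (D 0)"
    using der by (intro continuous_at_imp_continuous_on) (auto intro: DERIV_isCont)
  have "closed {y. \<bar>D 0 y\<bar> \<le> t}"
    by (intro closed_Collect_le) (auto intro!: continuous_intros cont)
  then have cS: "compact S" unfolding S_def by (intro compact_Int_closed) auto
  have eqS: "{y\<in>{a..b}. \<bar>D 0 y\<bar> \<le> t} = S" unfolding S_def by auto
  from greedy[OF cS g, of "2^n - 1"] show ?thesis
  proof
    assume "emeasure lborel S \<le> ennreal (real (2^n - 1) * g)"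
    also have "\<dots> \<le> ennreal (2^n * g)" using g
      by (intro ennreal_leI mult_right_mono) (auto simp: of_nat_diff)
    finally show ?thesis using eqS by simp
  next
    assume "\<exists>x. (\<forall>i\<le>2^n - 1. x i \<in> S) \<and> (\<forall>i<2^n - 1. x i + g \<le> x (Suc i))"
    then obtain x where x: "\<forall>i\<le>2^n - 1. x i \<in> S" "\<forall>i<2^n - 1. x i + g \<le> x (Suc i)" by blast
    have pos: "(0::nat) < 2^n" by simp
    have "c * g^n \<le> 2^n * t"
    proof (rule points_bound[of D a b c n x t g, OF der low _ _ g])
      show "x i \<in> {a..b} \<and> \<bar>D 0 (x i)\<bar> \<le> t" if "i < 2^n" for i
        using x(1) that unfolding S_def by (metis IntD1 IntD2 Suc_pred' less_Suc_eq_le mem_Collect_eq pos)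
      show "x i + g \<le> x (Suc i)" if "Suc i < 2^n" for i using x(2) that by auto
    qed auto
    then show ?thesis using gt by simp
  qed
qed

definition Wn :: "nat \<Rightarrow> real \<Rightarrow> real \<Rightarrow> real" where
  "Wn n c r = (if n = 0 then 4 * r / c else 2^n * (2^(n+1) * 2 / c) powr (1 / real n))"

lemma Wn_nonneg: "c > 0 \<Longrightarrow> r > 0 \<Longrightarrow> Wn n c r \<ge> 0"
  unfolding Wn_def by auto

lemma local_bound:
  fixes D :: "nat \<Rightarrow> real \<Rightarrow> real"
  assumes der: "\<And>m y. (D m has_real_derivative D (Suc m) y) (at y)"
    and bd: "\<And>y. \<bar>D (Suc n) y\<bar> \<le> B"
    and x0: "c \<le> \<bar>D n x0\<bar>" and c: "c > 0" and r: "r > 0" and Br: "B * r \<le> c / 2"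
    and N: "n \<le> N" "1 \<le> N"
  shows "emeasure lborel {y\<in>{x0-r..x0+r}. \<bar>D 0 y\<bar> \<le> exp (- real j)}
           \<le> ennreal (Wn n c r * exp (- real j / real N))"
proof -
  have B0: "B \<ge> 0" using bd[of 0] by linarith
  have low: "c/2 \<le> \<bar>D n y\<bar>" if "y \<in> {x0-r..x0+r}" for y
  proof -
    have "\<bar>D n y - D n x0\<bar> \<le> B * \<bar>y - x0\<bar>" by (rule lip_bound[OF der bd])
    also have "\<dots> \<le> B * r" using that B0 by (intro mult_left_mono) auto
    finally show ?thesis using x0 Br by linarith
  qed
  define t where "t = exp (- real j)"
  have t: "t > 0" unfolding t_def by simp
  have j1: "real j \<le> real N * real j" using mult_right_mono[of 1 "real N" "real j"] N by simp
  have eN: "exp (- real j) \<le> exp (- real j / real N)"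
    using N j1 by (simp add: field_simps)
  show ?thesis
  proof (cases "n = 0")
    case True
    show ?thesis
    proof (cases "t < c/2")
      case True
      have e: "{y\<in>{x0-r..x0+r}. \<bar>D 0 y\<bar> \<le> exp (- real j)} = {}"
        using low \<open>n = 0\<close> True unfolding t_def by force
      show ?thesis unfolding e by simp
    next
      case False
      have "emeasure lborel {y\<in>{x0-r..x0+r}. \<bar>D 0 y\<bar> \<le> exp (- real j)} \<le> emeasure lborel {x0-r..x0+r}"
        by (intro emeasure_mono) auto
      also have "\<dots> = ennreal (2 * r)" using r by simp
      also have "\<dots> \<le> ennreal (Wn n c r * exp (- real j / real N))"
      proof (intro ennreal_leI)
        have "2 * r \<le> 4 * r / c * t" using False c r by (simp add: field_simps)
        also have "\<dots> \<le> 4 * r / c * exp (- real j / real N)"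
          using eN c r unfolding t_def by (intro mult_left_mono) auto
        finally show "2 * r \<le> Wn n c r * exp (- real j / real N)" using \<open>n = 0\<close> by (simp add: Wn_def)
      qed
      finally show ?thesis .
    qed
  next
    case False
    define g where "g = (2^(n+1) * t / (c/2)) powr (1 / real n)"
    have base: "2^(n+1) * t / (c/2) > 0" using t c by simp
    have g: "g > 0" unfolding g_def using base t c by simp
    have gn: "g^n = 2^(n+1) * t / (c/2)"
    proof -
      have "g^n = g powr real n" using g by (simp add: powr_realpow)
      also have "\<dots> = 2^(n+1) * t / (c/2)" unfolding g_def using False base t c by (simp add: powr_powr)
      finally show ?thesis .
    qed
    have "2^n * t < c/2 * g^n" unfolding gn using c t by (simp add: field_simps)
    from sublevel[of D "x0-r" "x0+r" "c/2" n g t, OF der low g this]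
    have "emeasure lborel {y\<in>{x0-r..x0+r}. \<bar>D 0 y\<bar> \<le> t} \<le> ennreal (2^n * g)" .
    also have "2^n * g = 2^n * (2^(n+1) * 2 / c) powr (1 / real n) * t powr (1 / real n)"
    proof -
      have e: "2^(n+1) * t / (c/2) = (2^(n+1) * 2 / c) * t" by (simp add: field_simps)
      have "g = (2^(n+1) * 2 / c) powr (1 / real n) * t powr (1 / real n)"
        unfolding g_def e by (rule powr_mult; use c t in auto)
      then show ?thesis by simp
    qed
    also have "t powr (1 / real n) = exp (- real j / real n)"
      unfolding t_def by (simp add: powr_def)
    also have "ennreal (2^n * (2^(n+1) * 2 / c) powr (1 / real n) * exp (- real j / real n))
        \<le> ennreal (Wn n c r * exp (- real j / real N))"
    proof (intro ennreal_leI)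
      have "exp (- real j / real n) \<le> exp (- real j / real N)"
        using N False by (simp add: frac_le)
      then show "2^n * (2^(n+1) * 2 / c) powr (1 / real n) * exp (- real j / real n)
          \<le> Wn n c r * exp (- real j / real N)"
        using False by (simp add: Wn_def mult_left_mono)
    qed
    finally show ?thesis unfolding t_def .
  qed
qed



definition V :: "nat \<Rightarrow> (nat \<Rightarrow> real) \<Rightarrow> (nat \<Rightarrow> complex) \<Rightarrow> real \<Rightarrow> nat \<Rightarrow> complex \<Rightarrow> complex" where
  "V m a c b n z = (\<Sum>j<m. c j * (2*pi*\<i>* of_real (a j))^n * exp ((2*pi*\<i>* of_real (a j)) * (z + of_real b)))"

lemma V_deriv: "(V m a c b n has_field_derivative V m a c b (Suc n) z) (at z)"
proof -
  have "((\<lambda>z. c j * (2*pi*\<i>* of_real (a j))^n * exp ((2*pi*\<i>* of_real (a j)) * (z + of_real b)))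
     has_field_derivative c j * (2*pi*\<i>* of_real (a j))^Suc n * exp ((2*pi*\<i>* of_real (a j)) * (z + of_real b))) (at z)" for j
    by (auto intro!: derivative_eq_intros simp: algebra_simps power_Suc)
  then show ?thesis unfolding V_def[abs_def] by (intro DERIV_sum) auto
qed

lemma V_Re_deriv: "((\<lambda>y. Re (V m a c b n (of_real y))) has_real_derivative Re (V m a c b (Suc n) (of_real y))) (at y)"
  by (intro has_field_derivative_Re has_vector_derivative_real_field V_deriv)

lemma V_Im_deriv: "((\<lambda>y. Im (V m a c b n (of_real y))) has_real_derivative Im (V m a c b (Suc n) (of_real y))) (at y)"
  by (intro has_field_derivative_Im has_vector_derivative_real_field V_deriv)

lemma V_bound: "cmod (V m a c b n (of_real y)) \<le> (\<Sum>j<m. cmod (c j) * (2*pi*\<bar>a j\<bar>)^n)"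
  unfolding V_def
  apply (rule order_trans[OF norm_sum])
  apply (rule sum_mono)
  apply (simp add: norm_mult norm_power)
  done

lemma V_u:
  assumes "\<forall>x. u x = (\<Sum>j<m. c j * exp (2 * pi * \<i> * complex_of_real (a j * x)))"
  shows "u (y + b) = V m a c b 0 (of_real y)"
proof -
  have "u (y+b) = (\<Sum>j<m. c j * exp (2 * pi * \<i> * complex_of_real (a j * (y+b))))" using assms by blast
  then show ?thesis unfolding V_def by (simp add: algebra_simps)
qed

lemma V_nondeg:
  assumes rep: "\<forall>x. u x = (\<Sum>j<m. c j * exp (2 * pi * \<i> * complex_of_real (a j * x)))"
    and nz: "u \<noteq> (\<lambda>x. 0)"
  shows "\<exists>\<kappa>>0. \<exists>d. \<forall>b y. \<exists>n\<le>d. \<kappa> \<le> cmod (V m a c b n (of_real y))"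
proof -
  define L where "L \<beta> = 2*pi*\<i>* complex_of_real \<beta>" for \<beta>
  have Linj: "L \<alpha> = L \<beta> \<longleftrightarrow> \<alpha> = \<beta>" for \<alpha> \<beta> unfolding L_def by auto
  define A where "A = a ` {..<m}"
  define C where "C \<alpha> = (\<Sum>j\<in>{j\<in>{..<m}. a j = \<alpha>}. c j)" for \<alpha>
  have "\<exists>\<alpha>\<in>A. C \<alpha> \<noteq> 0"
  proof (rule ccontr)
    assume h: "\<not> (\<exists>\<alpha>\<in>A. C \<alpha> \<noteq> 0)"
    have "u x = 0" for x
    proof -
      have "u x = (\<Sum>j<m. c j * exp (L (a j) * of_real x))" using rep unfolding L_def by (simp add: algebra_simps)
      also have "\<dots> = (\<Sum>\<alpha>\<in>A. \<Sum>j\<in>{j\<in>{..<m}. a j = \<alpha>}. c j * exp (L (a j) * of_real x))"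
        unfolding A_def by (rule sum.image_gen) auto
      also have "\<dots> = (\<Sum>\<alpha>\<in>A. C \<alpha> * exp (L \<alpha> * of_real x))"
        unfolding C_def sum_distrib_right by (intro sum.cong refl) auto
      also have "\<dots> = 0" using h by simp
      finally show ?thesis .
    qed
    then show False using nz by auto
  qed
  then obtain \<alpha> where \<alpha>: "\<alpha> \<in> A" "C \<alpha> \<noteq> 0" by blast
  define B where "B = A - {\<alpha>}"
  have fB: "finite B" unfolding B_def A_def by simp
  define p where "p = (\<Prod>\<beta>\<in>B. [:- L \<beta>, 1:])"
  have pz: "poly p z = (\<Prod>\<beta>\<in>B. z - L \<beta>)" for z unfolding p_def by (simp add: poly_prod)
  have pa: "poly p (L \<alpha>) \<noteq> 0" unfolding pz using fB by (auto simp: B_def Linj)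
  have pj: "poly p (L (a j)) = 0" if "j < m" "a j \<noteq> \<alpha>" for j
    unfolding pz using fB that by (auto simp: B_def A_def intro!: bexI[of _ "a j"])
  define \<kappa>0 where "\<kappa>0 = cmod (C \<alpha>) * cmod (poly p (L \<alpha>))"
  have k0: "\<kappa>0 > 0" unfolding \<kappa>0_def using \<alpha> pa by simp
  define P where "P = (\<Sum>n\<le>degree p. cmod (coeff p n)) + 1"
  have P: "P > 0" "(\<Sum>n\<le>degree p. cmod (coeff p n)) = P - 1" unfolding P_def
    by (auto intro!: add_nonneg_pos sum_nonneg)
  have key: "(\<Sum>n\<le>degree p. coeff p n * V m a c b n (of_real y)) = C \<alpha> * poly p (L \<alpha>) * exp (L \<alpha> * (of_real y + of_real b))" for b y
  proof -
    have "(\<Sum>n\<le>degree p. coeff p n * V m a c b n (of_real y))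
        = (\<Sum>j<m. c j * poly p (L (a j)) * exp (L (a j) * (of_real y + of_real b)))"
      unfolding V_def poly_altdef sum_distrib_left sum_distrib_right L_def
      by (subst sum.swap) (auto intro!: sum.cong simp: ac_simps)
    also have "\<dots> = (\<Sum>j<m. if a j = \<alpha> then c j * poly p (L \<alpha>) * exp (L \<alpha> * (of_real y + of_real b)) else 0)"
      using pj by (intro sum.cong) auto
    also have "\<dots> = (\<Sum>j\<in>{j\<in>{..<m}. a j = \<alpha>}. c j * poly p (L \<alpha>) * exp (L \<alpha> * (of_real y + of_real b)))"
      by (rule sum.inter_filter[symmetric]) simp
    also have "\<dots> = C \<alpha> * poly p (L \<alpha>) * exp (L \<alpha> * (of_real y + of_real b))"
      unfolding C_def sum_distrib_right by simp
    finally show ?thesis .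
  qed
  have "\<forall>b y. \<exists>n\<le>degree p. \<kappa>0 / P \<le> cmod (V m a c b n (of_real y))"
  proof (intro allI, rule ccontr)
    fix b y
    assume "\<not> (\<exists>n\<le>degree p. \<kappa>0 / P \<le> cmod (V m a c b n (of_real y)))"
    then have lt: "\<And>n. n \<le> degree p \<Longrightarrow> cmod (V m a c b n (of_real y)) < \<kappa>0 / P" by force
    have "\<kappa>0 = cmod (\<Sum>n\<le>degree p. coeff p n * V m a c b n (of_real y))"
      unfolding key \<kappa>0_def L_def by (simp add: norm_mult)
    also have "\<dots> \<le> (\<Sum>n\<le>degree p. cmod (coeff p n) * cmod (V m a c b n (of_real y)))"
      by (rule order_trans[OF norm_sum]) (simp add: norm_mult)
    also have "\<dots> \<le> (\<Sum>n\<le>degree p. cmod (coeff p n) * (\<kappa>0 / P))"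
      using lt by (intro sum_mono mult_left_mono) (auto simp: less_imp_le)
    also have "\<dots> = (P - 1) * (\<kappa>0 / P)" unfolding sum_distrib_right[symmetric] P(2) ..
    also have "\<dots> < \<kappa>0" using P k0 by (simp add: field_simps)
    finally show False by simp
  qed
  then show ?thesis using k0 P by (intro exI[of _ "\<kappa>0 / P"]) auto
qed



lemma closed_sub_meas:
  fixes f :: "real \<Rightarrow> real"
  assumes "continuous_on UNIV f"
  shows "{y\<in>{a..b}. f y \<le> t} \<in> sets lborel"
proof -
  have "closed ({a..b} \<inter> {y. f y \<le> t})"
    by (intro closed_Int closed_Collect_le) (auto intro!: continuous_intros assms)
  moreover have "{y\<in>{a..b}. f y \<le> t} = {a..b} \<inter> {y. f y \<le> t}" by auto
  ultimately show ?thesis by (simp add: borel_closed)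
qed

lemma V_cont: "continuous_on UNIV (\<lambda>y. V m a c b n (of_real y))"
proof (intro continuous_at_imp_continuous_on ballI)
  fix y :: real
  have "((\<lambda>y. V m a c b n (of_real y)) has_vector_derivative V m a c b (Suc n) (of_real y)) (at y)"
    by (rule has_vector_derivative_real_field[OF V_deriv])
  then show "isCont (\<lambda>y. V m a c b n (of_real y)) y" by (rule has_vector_derivative_continuous)
qed

lemma V_Re_cont: "continuous_on UNIV (\<lambda>y. \<bar>Re (V m a c b n (of_real y))\<bar>)"
  using V_cont by (intro continuous_intros) auto

lemma V_Im_cont: "continuous_on UNIV (\<lambda>y. \<bar>Im (V m a c b n (of_real y))\<bar>)"
  using V_cont by (intro continuous_intros) auto

lemma uniform_bound:
  fixes m :: nat and a :: "nat \<Rightarrow> real" and c :: "nat \<Rightarrow> complex" and u :: "real \<Rightarrow> complex" and K :: real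
  assumes rep: "\<forall>x. u x = (\<Sum>j<m. c j * exp (2 * pi * \<i> * complex_of_real (a j * x)))"
    and nz: "u \<noteq> (\<lambda>x. 0)" and K: "K > 0"
  shows "\<exists>C0 N. C0 \<ge> 0 \<and> N \<ge> 1 \<and> (\<forall>s b j. emeasure lborel {x\<in>{s..s+K}. cmod (u (x+b)) \<le> exp (- real j)}
            \<le> ennreal (C0 * exp (- real j / real N)))"
proof -
  obtain \<kappa> d where \<kappa>: "\<kappa> > 0" and nd: "\<forall>b y. \<exists>n\<le>d. \<kappa> \<le> cmod (V m a c b n (of_real y))"
    using V_nondeg[OF rep nz] by blast
  define Bd where "Bd n = (\<Sum>j<m. cmod (c j) * (2*pi*\<bar>a j\<bar>)^n)" for n
  define B where "B = (\<Sum>n\<le>Suc d. Bd n)"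
  have Bd0: "Bd n \<ge> 0" for n unfolding Bd_def by (intro sum_nonneg) auto
  have BdB: "Bd (Suc n) \<le> B" if "n \<le> d" for n unfolding B_def using that Bd0
    by (intro member_le_sum) auto
  have B0: "B \<ge> 0" unfolding B_def using Bd0 by (simp add: sum_nonneg)
  define c' where "c' = \<kappa>/2"
  define r where "r = c' / (2*(B+1))"
  have c': "c' > 0" and r: "r > 0" using \<kappa> B0 by (auto simp: c'_def r_def)
  have Br: "B * r \<le> c'/2"
  proof -
    have "B * r = c' / 2 * (B / (B+1))" unfolding r_def using B0 by (simp add: field_simps)
    also have "\<dots> \<le> c'/2 * 1" using B0 c' by (intro mult_left_mono) auto
    finally show ?thesis by simp
  qed
  define N where "N = Suc d"
  define W where "W = (\<Sum>n\<le>d. Wn n c' r)"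
  have WnW: "Wn n c' r \<le> W" if "n \<le> d" for n unfolding W_def using that Wn_nonneg[OF c' r]
    by (intro member_le_sum) auto
  have W0: "W \<ge> 0" unfolding W_def using Wn_nonneg[OF c' r] by (simp add: sum_nonneg)
  define L where "L = nat \<lceil>K / r\<rceil>"
  have meas: "{x\<in>{p..q}. cmod (u (x+b)) \<le> t} \<in> sets lborel" for p q b t
  proof -
    have "continuous_on UNIV (\<lambda>x. cmod (u (x+b)))"
      unfolding V_u[OF rep] using V_cont by (intro continuous_intros) auto
    then show ?thesis by (rule closed_sub_meas)
  qed
  have local: "emeasure lborel {x\<in>{x0-r..x0+r}. cmod (u (x+b)) \<le> exp (- real j)}
       \<le> ennreal (W * exp (- real j / real N))" for x0 b j
  proof -
    obtain n where n: "n \<le> d" "\<kappa> \<le> cmod (V m a c b n (of_real x0))" using nd by blast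
    have bdn: "cmod (V m a c b (Suc n) (of_real y)) \<le> B" for y
      using V_bound[of m a c b "Suc n" y] BdB[OF n(1)] unfolding Bd_def by linarith
    have Nn: "n \<le> N" "1 \<le> N" using n unfolding N_def by auto
    have "c' \<le> \<bar>Re (V m a c b n (of_real x0))\<bar> \<or> c' \<le> \<bar>Im (V m a c b n (of_real x0))\<bar>"
      using cmod_le[of "V m a c b n (of_real x0)"] n(2) unfolding c'_def by linarith
    then have "emeasure lborel {x\<in>{x0-r..x0+r}. cmod (u (x+b)) \<le> exp (- real j)}
        \<le> ennreal (Wn n c' r * exp (- real j / real N))"
    proof
      assume h: "c' \<le> \<bar>Re (V m a c b n (of_real x0))\<bar>"
      have "emeasure lborel {x\<in>{x0-r..x0+r}. cmod (u (x+b)) \<le> exp (- real j)}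
          \<le> emeasure lborel {y\<in>{x0-r..x0+r}. \<bar>Re (V m a c b 0 (of_real y))\<bar> \<le> exp (- real j)}"
        using abs_Re_le_cmod
        by (intro emeasure_mono closed_sub_meas V_Re_cont)
          (auto simp: V_u[OF rep] intro: order_trans[OF abs_Re_le_cmod])
      also have "\<dots> \<le> ennreal (Wn n c' r * exp (- real j / real N))"
        by (rule local_bound[where D = "\<lambda>k y. Re (V m a c b k (of_real y))", OF V_Re_deriv _ h c' r Br Nn])
          (use bdn abs_Re_le_cmod in \<open>blast intro: order_trans\<close>)
      finally show ?thesis .
    next
      assume h: "c' \<le> \<bar>Im (V m a c b n (of_real x0))\<bar>"
      have "emeasure lborel {x\<in>{x0-r..x0+r}. cmod (u (x+b)) \<le> exp (- real j)}
          \<le> emeasure lborel {y\<in>{x0-r..x0+r}. \<bar>Im (V m a c b 0 (of_real y))\<bar> \<le> exp (- real j)}"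
        by (intro emeasure_mono closed_sub_meas V_Im_cont)
          (auto simp: V_u[OF rep] intro: order_trans[OF abs_Im_le_cmod])
      also have "\<dots> \<le> ennreal (Wn n c' r * exp (- real j / real N))"
        by (rule local_bound[where D = "\<lambda>k y. Im (V m a c b k (of_real y))", OF V_Im_deriv _ h c' r Br Nn])
          (use bdn abs_Im_le_cmod in \<open>blast intro: order_trans\<close>)
      finally show ?thesis .
    qed
    also have "\<dots> \<le> ennreal (W * exp (- real j / real N))"
      using WnW[OF n(1)] by (intro ennreal_leI mult_right_mono) auto
    finally show ?thesis .
  qed
  have cover: "{x\<in>{s..s+K}. cmod (u (x+b)) \<le> t} \<subseteq>
      (\<Union>k\<in>{..L}. {x\<in>{(s + real k * r)-r..(s + real k * r)+r}. cmod (u (x+b)) \<le> t})" for s b t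
  proof
    fix x assume x: "x \<in> {x\<in>{s..s+K}. cmod (u (x+b)) \<le> t}"
    have xs: "0 \<le> x - s" "x - s \<le> K" using x by auto
    have q: "0 \<le> (x-s)/r" "(x-s)/r \<le> K/r" using xs r by (auto intro: divide_right_mono)
    define k where "k = nat \<lfloor>(x-s)/r\<rfloor>"
    have k1: "real k \<le> (x-s)/r" using q unfolding k_def by simp
    have k2: "(x-s)/r < real k + 1" using q unfolding k_def by linarith
    have k3: "k \<le> L" unfolding L_def k_def
      by (intro nat_mono order_trans[OF floor_mono[OF q(2)] floor_le_ceiling])
    have "real k * r \<le> x - s" using k1 r by (simp add: field_simps)
    moreover have "x - s < real k * r + r" using k2 r by (simp add: field_simps)
    ultimately show "x \<in> (\<Union>k\<in>{..L}. {x\<in>{(s + real k * r)-r..(s + real k * r)+r}. cmod (u (x+b)) \<le> t})"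
      using x k3 by (intro UN_I[of k]) auto
  qed
  have "emeasure lborel {x\<in>{s..s+K}. cmod (u (x+b)) \<le> exp (- real j)}
      \<le> ennreal (real (Suc L) * W * exp (- real j / real N))" for s b j
  proof -
    have "emeasure lborel {x\<in>{s..s+K}. cmod (u (x+b)) \<le> exp (- real j)}
      \<le> emeasure lborel (\<Union>k\<in>{..L}. {x\<in>{(s + real k * r)-r..(s + real k * r)+r}. cmod (u (x+b)) \<le> exp (- real j)})"
      using cover meas by (intro emeasure_mono) auto
    also have "\<dots> \<le> (\<Sum>k\<in>{..L}. emeasure lborel {x\<in>{(s + real k * r)-r..(s + real k * r)+r}. cmod (u (x+b)) \<le> exp (- real j)})"
      using meas by (intro emeasure_subadditive_finite) auto
    also have "\<dots> \<le> (\<Sum>k\<in>{..L}. ennreal (W * exp (- real j / real N)))"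
      by (intro sum_mono local)
    also have "\<dots> = ennreal (real (Suc L)) * ennreal (W * exp (- real j / real N))"
      by (simp only: sum_constant card_atMost ennreal_of_nat_eq_real_of_nat)
    also have "\<dots> = ennreal (real (Suc L) * W * exp (- real j / real N))"
      unfolding mult.assoc using W0 by (intro ennreal_mult[symmetric]) auto
    finally show ?thesis .
  qed
  then show ?thesis using W0 unfolding N_def
    by (intro exI[of _ "real (Suc L) * W"] exI[of _ "Suc d"]) auto
qed



theorem lemma3p2:
  fixes u :: "real \<Rightarrow> complex" and K :: real
  assumes "trig_poly u" and "u \<noteq> (\<lambda>x. 0)" and "K > 0"
  shows "\<exists>\<eta>::real. \<forall>(k::nat) (b::nat \<Rightarrow> real) (I::real set).
           (\<exists>s. I = {s<..<s+K} \<or> I = {s..s+K} \<or> I = {s<..s+K} \<or> I = {s..<s+K}) \<longrightarrow>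
           (\<exists>E. E \<in> sets lebesgue \<and> E \<subseteq> I \<and> measure lebesgue E > measure lebesgue I / 2 \<and>
                (\<forall>x\<in>E. norm (\<Prod>i<k. u (x + b i)) \<ge> exp (- \<eta> * real k)))"
proof -
  obtain m :: nat and a :: "nat \<Rightarrow> real" and c :: "nat \<Rightarrow> complex" where
    rep: "\<forall>x. u x = (\<Sum>j<m. c j * exp (2 * pi * \<i> * complex_of_real (a j * x)))"
    using assms(1) unfolding trig_poly_def by blast
  obtain C0 and N :: nat where C0: "C0 \<ge> 0" "N \<ge> 1" and
    ub: "\<And>s b j. emeasure lborel {x\<in>{s..s+K}. cmod (u (x+b)) \<le> exp (- real j)}
            \<le> ennreal (C0 * exp (- real j / real N))"
    using uniform_bound[OF rep assms(2,3)] by blast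
  define q where "q = exp (- 1 / real N)"
  have q: "0 \<le> q" "q < 1" unfolding q_def using C0 by auto
  define Ct where "Ct = C0 / (1 - q)"
  have Ct: "Ct \<ge> 0" unfolding Ct_def using C0 q by simp
  have eq: "exp (- real j / real N) = q ^ j" for j
    unfolding q_def exp_of_nat_mult[symmetric] by simp
  have sumj: "(\<Sum>j. ennreal (C0 * exp (- real j / real N))) = ennreal Ct"
  proof -
    have "(\<lambda>j. C0 * q^j) sums (C0 * (1 / (1 - q)))"
      by (intro sums_mult geometric_sums) (use q in auto)
    then show ?thesis unfolding eq Ct_def using C0 q
      by (intro suminf_ennreal_eq) auto
  qed
  have ucont: "continuous_on UNIV (\<lambda>x. cmod (u (x + b)))" for b
    unfolding V_u[OF rep] using V_cont by (intro continuous_intros) auto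
  define \<eta> where "\<eta> = 4 * Ct / K + 1"
  have \<eta>: "\<eta> > 0" unfolding \<eta>_def using Ct assms(3) by (simp add: add_nonneg_pos)
  have \<eta>2: "Ct / \<eta> < K / 4"
  proof -
    have "4 * Ct < K * \<eta>" unfolding \<eta>_def using assms(3) by (simp add: field_simps)
    then show ?thesis using \<eta> by (simp add: field_simps)
  qed
  show ?thesis
  proof (intro exI[of _ \<eta>] allI impI)
    fix k :: nat and b :: "nat \<Rightarrow> real" and I :: "real set"
    assume "\<exists>s. I = {s<..<s+K} \<or> I = {s..s+K} \<or> I = {s<..s+K} \<or> I = {s..<s+K}"
    then obtain s where I: "I = {s<..<s+K} \<or> I = {s..s+K} \<or> I = {s<..s+K} \<or> I = {s..<s+K}" by blast
    have Isub: "I \<subseteq> {s..s+K}" using I by auto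
    have Imeas: "I \<in> sets lborel" using I by (auto simp: greaterThanLessThan_borel atLeastAtMost_borel
        greaterThanAtMost_borel atLeastLessThan_borel)
    have mI: "measure lborel I = K" using I assms(3) by auto
    have mIleb: "measure lebesgue I = K" using mI Imeas by simp
    have Ifin: "emeasure lborel I \<noteq> \<infinity>"
    proof -
      have "emeasure lborel I \<le> emeasure lborel {s..s+K}" using Isub by (intro emeasure_mono) auto
      then show ?thesis using assms(3) by (auto simp: top_unique)
    qed
    show "\<exists>E. E \<in> sets lebesgue \<and> E \<subseteq> I \<and> measure lebesgue E > measure lebesgue I / 2 \<and>
                (\<forall>x\<in>E. norm (\<Prod>i<k. u (x + b i)) \<ge> exp (- \<eta> * real k))"
    proof (cases "k = 0")
      case True
      then show ?thesis using Imeas mIleb assms(3) by (intro exI[of _ I]) auto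
    next
      case False
      define G where "G i j = {x. cmod (u (x + b i)) \<le> exp (- real j)}" for i j
      have Gm[measurable]: "G i j \<in> sets borel" for i j
      proof -
        have "closed (G i j)" unfolding G_def
          by (intro closed_Collect_le) (auto intro!: continuous_intros ucont)
        then show ?thesis by (rule borel_closed)
      qed
      define F where "F x = (\<Sum>i<k. \<Sum>j. indicator (G i j) x :: ennreal)" for x
      have Fm: "F \<in> borel_measurable lborel" unfolding F_def by measurable
      have "(\<integral>\<^sup>+ x. F x * indicator I x \<partial>lborel) = (\<integral>\<^sup>+ x. (\<Sum>i<k. \<Sum>j. indicator (G i j \<inter> I) x) \<partial>lborel)"
        unfolding F_def sum_distrib_right ennreal_suminf_multc[symmetric] indicator_inter_arith ..
      also have "\<dots> = (\<Sum>i<k. \<Sum>j. emeasure lborel (G i j \<inter> I))"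
        using Imeas by (simp add: nn_integral_sum nn_integral_suminf)
      also have "\<dots> \<le> (\<Sum>i<k. ennreal Ct)"
      proof (intro sum_mono)
        fix i
        have "(\<Sum>j. emeasure lborel (G i j \<inter> I)) \<le> (\<Sum>j. ennreal (C0 * exp (- real j / real N)))"
        proof (intro suminf_le)
          fix j
          have "emeasure lborel (G i j \<inter> I) \<le> emeasure lborel {x\<in>{s..s+K}. cmod (u (x + b i)) \<le> exp (- real j)}"
            using Isub by (intro emeasure_mono closed_sub_meas ucont) (auto simp: G_def)
          also have "\<dots> \<le> ennreal (C0 * exp (- real j / real N))" by (rule ub)
          finally show "emeasure lborel (G i j \<inter> I) \<le> ennreal (C0 * exp (- real j / real N))" .
        qed auto
        then show "(\<Sum>j. emeasure lborel (G i j \<inter> I)) \<le> ennreal Ct" unfolding sumj .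
      qed
      also have "\<dots> = ennreal (real k * Ct)"
        by (simp add: ennreal_of_nat_eq_real_of_nat ennreal_mult Ct)
      finally have intF: "(\<integral>\<^sup>+ x. F x * indicator I x \<partial>lborel) \<le> ennreal (real k * Ct)" .
      define cc where "cc = ennreal (1 / (\<eta> * real k))"
      define Bad where "Bad = {x\<in>I. 1 \<le> cc * F x}"
      have Badm: "Bad \<in> sets lborel" unfolding Bad_def using Imeas Fm by measurable
      have "emeasure lborel Bad \<le> cc * (\<integral>\<^sup>+ x. F x * indicator I x \<partial>lborel)"
        unfolding Bad_def using Imeas Fm by (intro nn_integral_Markov_inequality) auto
      also have "\<dots> \<le> cc * ennreal (real k * Ct)" by (intro mult_left_mono intF) auto
      also have "\<dots> = ennreal (Ct / \<eta>)" unfolding cc_def using False \<eta> Ct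
        by (simp add: ennreal_mult[symmetric] field_simps)
      finally have eBad: "emeasure lborel Bad \<le> ennreal (Ct / \<eta>)" .
      have mBad: "measure lborel Bad \<le> Ct / \<eta>" unfolding measure_def
        using eBad Ct \<eta> by (intro enn2real_leI) auto
      define E where "E = I - Bad"
      have Em: "E \<in> sets lborel" unfolding E_def using Imeas Badm by auto
      have "measure lborel E = K - measure lborel Bad"
        unfolding E_def using Ifin Imeas Badm mI by (subst measure_Diff) (auto simp: Bad_def)
      moreover have "measure lborel Bad < K/4" using mBad \<eta>2 by linarith
      ultimately have "measure lborel E > K / 2" using assms(3) by linarith
      then have mE: "measure lebesgue E > K / 2" using Em by simp
      have good: "norm (\<Prod>i<k. u (x + b i)) \<ge> exp (- \<eta> * real k)" if x: "x \<in> E" for x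
      proof -
        have nb: "\<not> 1 \<le> cc * F x" using x unfolding E_def Bad_def by auto
        have Flt: "F x < ennreal (\<eta> * real k)"
        proof (rule ccontr)
          assume "\<not> F x < ennreal (\<eta> * real k)"
          then have "ennreal (\<eta> * real k) \<le> F x" by simp
          then have "cc * ennreal (\<eta> * real k) \<le> cc * F x" by (intro mult_left_mono) auto
          also have "cc * ennreal (\<eta> * real k) = 1" unfolding cc_def using False \<eta>
            by (simp add: ennreal_mult[symmetric])
          finally show False using nb by simp
        qed
        define cnt where "cnt i = (\<Sum>j. indicator (G i j) x :: ennreal)" for i
        have cntF: "cnt i \<le> F x" if "i < k" for i
          unfolding F_def cnt_def using that by (intro member_le_sum) auto
        have "\<forall>i. \<exists>mm::nat. i < k \<longrightarrow> exp (- real mm) < cmod (u (x + b i)) \<and> of_nat mm \<le> cnt i"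
        proof (intro allI impI)
          fix i
          show "\<exists>mm::nat. i < k \<longrightarrow> exp (- real mm) < cmod (u (x + b i)) \<and> of_nat mm \<le> cnt i"
          proof (cases "i < k")
            case ik: True
            have lower: "of_nat n \<le> cnt i" if "\<And>j. j < n \<Longrightarrow> x \<in> G i j" for n
            proof -
              have "(of_nat n :: ennreal) = (\<Sum>j<n. indicator (G i j) x)" using that by simp
              also have "\<dots> \<le> cnt i" unfolding cnt_def by (intro sum_le_suminf) auto
              finally show ?thesis .
            qed
            have "\<exists>j. x \<notin> G i j"
            proof (rule ccontr)
              assume "\<not> (\<exists>j. x \<notin> G i j)"
              then have all: "x \<in> G i j" for j by blast
              obtain n :: nat where n: "\<eta> * real k < real n" using reals_Archimedean2 by blast
              have "ennreal (real n) \<le> cnt i" using lower[of n] all by (simp add: ennreal_of_nat_eq_real_of_nat)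
              also have "\<dots> \<le> F x" by (rule cntF[OF ik])
              also have "\<dots> < ennreal (\<eta> * real k)" by (rule Flt)
              finally have "real n < \<eta> * real k" by (simp add: ennreal_less_iff)
              then show False using n by simp
            qed
            then obtain j0 where "x \<notin> G i j0" by blast
            define mm where "mm = (LEAST j. x \<notin> G i j)"
            have mm1: "x \<notin> G i mm" unfolding mm_def by (rule LeastI) fact
            have mm2: "x \<in> G i j" if "j < mm" for j using not_less_Least[OF that[unfolded mm_def]] by blast
            show ?thesis using mm1 lower[of mm] mm2 by (intro exI[of _ mm]) (auto simp: G_def)
          qed simp
        qed
        then obtain M :: "nat \<Rightarrow> nat" where M: "\<And>i. i < k \<Longrightarrow> exp (- real (M i)) < cmod (u (x + b i)) \<and> of_nat (M i) \<le> cnt i"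
          by metis
        have "(of_nat (\<Sum>i<k. M i) :: ennreal) = (\<Sum>i<k. of_nat (M i))" by simp
        also have "\<dots> \<le> (\<Sum>i<k. cnt i)" using M by (intro sum_mono) auto
        also have "\<dots> = F x" unfolding F_def cnt_def ..
        also have "\<dots> < ennreal (\<eta> * real k)" by (rule Flt)
        finally have "ennreal (real (\<Sum>i<k. M i)) < ennreal (\<eta> * real k)"
          by (simp only: ennreal_of_nat_eq_real_of_nat)
        then have sM: "real (\<Sum>i<k. M i) < \<eta> * real k"
          using ennreal_less_iff[of "real (\<Sum>i<k. M i)" "\<eta> * real k"] by (simp add: sum_nonneg)
        have "exp (- \<eta> * real k) \<le> exp (- real (\<Sum>i<k. M i))" using sM by simp
        also have "\<dots> = (\<Prod>i<k. exp (- real (M i)))"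
          by (simp add: exp_sum[symmetric] sum_negf)
        also have "\<dots> \<le> (\<Prod>i<k. cmod (u (x + b i)))"
          using M by (intro prod_mono) (auto simp: less_imp_le)
        also have "\<dots> = norm (\<Prod>i<k. u (x + b i))" by (simp add: prod_norm)
        finally show ?thesis .
      qed
      show ?thesis using Em mE mIleb good by (intro exI[of _ E]) (auto simp: E_def)
    qed
  qed
qed


end
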